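(* Let $\rho\in(0,1)$, $h>0$, $\delta\ge0$, and $\hat S_\rho=(I+\rho^{-2}\widehat\Pi)^{1/2}$. If $\operatorname{tr}\big((I-\widehat\Pi)\Pi^*\big)\le\delta^2$, then for every $x\in\mathbb R^d$, $|\hat S_\rho x|\le h$ implies $|\Pi^*x|\le(\rho+\delta)h$.
   Context: $\Pi^*$ is the orthogonal projector onto an $m^*$-dimensional subspace of $\mathbb R^d$. $I$ is the $d\times d$ identity, $|\cdot|$ the Euclidean norm, $A\preceq B$ means $B-A$ is positive semidefinite. Let $\hat\beta_1,\dots,\hat\beta_L\in\mathbb R^d$ be arbitrary vectors, $\mathcal A_{m^*}=\{\Pi\in\mathbb R^{d\times d}:\Pi=\Pi^\top,\ 0\preceq\Pi\preceq I,\ \operatorname{tr}\Pi\le m^*\}$, and let $\widehat\Pi$ be a minimizer over $\Pi\in\mathcal A_{m^*}$ of $\max_\ell\hat\beta_\ell^\top(I-\Pi)\hat\beta_\ell$. Square roots are positive semidefinite square roots. *)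

theory Defs
  imports "HOL-Analysis.Analysis"
begin

definition psd :: "real^'n^'n \<Rightarrow> bool" where
  "psd A \<longleftrightarrow> transpose A = A \<and> (\<forall>x. 0 \<le> x \<bullet> (A *v x))"

definition loewner_le :: "real^'n^'n \<Rightarrow> real^'n^'n \<Rightarrow> bool" where
  "loewner_le A B \<longleftrightarrow> psd (B - A)"

definition psd_sqrt :: "real^'n^'n \<Rightarrow> real^'n^'n" where
  "psd_sqrt A = (THE S. psd S \<and> S ** S = A)"

definition orth_proj :: "nat \<Rightarrow> real^'n^'n \<Rightarrow> bool" where
  "orth_proj m P \<longleftrightarrow> transpose P = P \<and> P ** P = P \<and> rank P = m"

definition Aset :: "nat \<Rightarrow> (real^'n^'n) set" where
  "Aset m = {P. transpose P = P \<and> loewner_le 0 P \<and> loewner_le P (mat 1) \<and> trace P \<le> real m}"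

definition objective :: "(nat \<Rightarrow> real^'n) \<Rightarrow> nat \<Rightarrow> real^'n^'n \<Rightarrow> real" where
  "objective beta L P = Max ((\<lambda>l. beta l \<bullet> ((mat 1 - P) *v beta l)) ` {1..L})"

end

theory Submission
  imports Defs
begin


lemma sym_inner:
  fixes M :: "real^'n^'n"
  assumes "transpose M = M"
  shows "(M *v x) \<bullet> y = x \<bullet> (M *v y)"
  by (metis assms dot_lmul_matrix transpose_matrix_vector)

lemma quad_disc:
  fixes a b c :: real
  assumes "\<And>t. 0 \<le> a + 2*b*t + c*t^2" and "0 \<le> c"
  shows "b^2 \<le> a * c"
proof (cases "c = 0")
  case True
  have "b = 0"
  proof (rule ccontr)
    assume "b \<noteq> 0"
    have "0 \<le> a + 2*b*(-(a+1)/(2*b))" using assms(1)[of "-(a+1)/(2*b)"] True by simp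
    also have "\<dots> = -1" using \<open>b \<noteq> 0\<close> by (simp add: field_simps)
    finally show False by simp
  qed
  then show ?thesis using True by simp
next
  case False
  then have c: "c > 0" using assms(2) by simp
  have "0 \<le> a + 2*b*(-b/c) + c*(-b/c)^2" using assms(1) by blast
  also have "\<dots> = (a*c - b^2)/c" using c by (simp add: field_simps power2_eq_square)
  finally show ?thesis using c by (simp add: divide_nonneg_pos zero_le_divide_iff)
qed

lemma psd_cs:
  fixes S :: "real^'n^'n"
  assumes "psd S"
  shows "(y \<bullet> (S *v z))^2 \<le> (y \<bullet> (S *v y)) * (z \<bullet> (S *v z))"
proof -
  have sym: "transpose S = S" and nn: "\<And>x. 0 \<le> x \<bullet> (S *v x)" using assms by (auto simp: psd_def)
  have "\<And>t. 0 \<le> y \<bullet> (S *v y) + 2 * (y \<bullet> (S *v z)) * t + (z \<bullet> (S *v z)) * t^2"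
  proof -
    fix t :: real
    have "(y + t *\<^sub>R z) \<bullet> (S *v (y + t *\<^sub>R z)) = y \<bullet> (S *v y) + t * (y \<bullet> (S *v z)) + t * (z \<bullet> (S *v y)) + t^2 * (z \<bullet> (S *v z))"
      by (simp add: matrix_vector_right_distrib inner_add_left inner_add_right matrix_vector_mult_scaleR power2_eq_square algebra_simps)
    moreover have "z \<bullet> (S *v y) = y \<bullet> (S *v z)"
      by (metis sym sym_inner inner_commute)
    ultimately show "0 \<le> y \<bullet> (S *v y) + 2 * (y \<bullet> (S *v z)) * t + (z \<bullet> (S *v z)) * t^2"
      using nn[of "y + t *\<^sub>R z"] by (simp add: algebra_simps power2_eq_square)
  qed
  then show ?thesis using quad_disc nn by blast
qed

lemma psd_zero:
  fixes S :: "real^'n^'n"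
  assumes "psd S" "x \<bullet> (S *v x) = 0"
  shows "S *v x = 0"
proof -
  have "((S *v x) \<bullet> (S *v x))^2 \<le> 0"
    using psd_cs[OF assms(1), of "S *v x" x] assms(2) by simp
  then show ?thesis by simp
qed

lemma contraction_sq:
  fixes A :: "real^'n^'n"
  assumes "psd A" "psd (mat 1 - A)"
  shows "(A *v x) \<bullet> (A *v x) \<le> x \<bullet> (A *v x)"
proof -
  let ?y = "A *v x"
  have sym: "transpose A = A" using assms(1) by (simp add: psd_def)
  have e: "x \<bullet> (A *v ?y) = ?y \<bullet> ?y" using sym_inner[OF sym, of x ?y] by simp
  have le: "?y \<bullet> (A *v ?y) \<le> ?y \<bullet> ?y"
    using assms(2) unfolding psd_def
    by (auto simp: matrix_vector_mult_diff_rdistrib inner_diff_right dest: spec[of _ ?y])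
  have cs: "(?y \<bullet> ?y)^2 \<le> (x \<bullet> (A *v x)) * (?y \<bullet> (A *v ?y))"
    using psd_cs[OF assms(1), of x ?y] e by simp
  have nx: "0 \<le> x \<bullet> (A *v x)" using assms(1) by (simp add: psd_def)
  have "(?y \<bullet> ?y)^2 \<le> (x \<bullet> (A *v x)) * (?y \<bullet> ?y)"
    using cs mult_left_mono[OF le nx] by linarith
  then show ?thesis
    by (cases "?y \<bullet> ?y = 0") (auto simp: power2_eq_square)
qed


lemma eigvec_exists:
  fixes A :: "real^'n^'n"
  assumes sym: "transpose A = A" and sub: "subspace V" and nz: "\<not> V \<subseteq> {0}"
    and inv: "\<forall>x\<in>V. A *v x \<in> V"
  shows "\<exists>v\<in>V. norm v = 1 \<and> A *v v = (v \<bullet> (A *v v)) *\<^sub>R v"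
proof -
  define K where "K = V \<inter> sphere 0 1"
  have cK: "compact K" unfolding K_def
    using closed_subspace[OF sub] compact_sphere closed_Int_compact by blast
  obtain y where y: "y \<in> V" "y \<noteq> 0" using nz by auto
  then have "y /\<^sub>R norm y \<in> K" unfolding K_def
    using sub by (simp add: subspace_scale)
  then have neK: "K \<noteq> {}" by auto
  have cont: "continuous_on K (\<lambda>x. x \<bullet> (A *v x))"
    by (rule continuous_on_inner[OF continuous_on_id linear_continuous_on[OF matrix_vector_mul_bounded_linear]])
  obtain v where vK: "v \<in> K" and vmax: "\<And>u. u \<in> K \<Longrightarrow> u \<bullet> (A *v u) \<le> v \<bullet> (A *v v)"
    using continuous_attains_sup[OF cK neK cont] by metis
  define l where "l = v \<bullet> (A *v v)"
  have vV: "v \<in> V" and nv: "norm v = 1" using vK by (auto simp: K_def)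
  have vv: "v \<bullet> v = 1" using nv by (simp add: dot_square_norm)
  have claim: "y \<bullet> (A *v y) \<le> l * (y \<bullet> y)" if "y \<in> V" for y
  proof (cases "y = 0")
    case True then show ?thesis by simp
  next
    case False
    let ?u = "y /\<^sub>R norm y"
    have "?u \<in> K" unfolding K_def using sub that False by (simp add: subspace_scale)
    then have "?u \<bullet> (A *v ?u) \<le> l" using vmax l_def by blast
    moreover have "y \<bullet> (A *v y) = (norm y)^2 * (?u \<bullet> (A *v ?u))"
    proof -
      have "?u \<bullet> (A *v ?u) = inverse (norm y) * inverse (norm y) * (y \<bullet> (A *v y))"
        by (simp add: matrix_vector_mult_scaleR)
      then show ?thesis using False by (simp add: field_simps power2_eq_square)
    qed
    ultimately have "y \<bullet> (A *v y) \<le> (norm y)^2 * l"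
      by (simp add: mult_left_mono)
    then show ?thesis by (simp add: dot_square_norm mult.commute)
  qed
  define w where "w = A *v v - l *\<^sub>R v"
  have wV: "w \<in> V" unfolding w_def using inv vV sub by (simp add: subspace_diff subspace_scale)
  have vw: "v \<bullet> w = 0" unfolding w_def l_def using vv by (simp add: inner_diff_right)
  have wAv: "w \<bullet> (A *v v) = w \<bullet> w"
  proof -
    have "A *v v = w + l *\<^sub>R v" unfolding w_def by simp
    then show ?thesis using vw by (simp add: inner_add_right inner_commute)
  qed
  have vAw: "v \<bullet> (A *v w) = w \<bullet> w"
    using sym_inner[OF sym, of v w] wAv by (simp add: inner_commute)
  have "\<And>t. 0 \<le> 0 + 2 * (- (w \<bullet> w)) * t + (l * (w \<bullet> w) - w \<bullet> (A *v w)) * t^2"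
  proof -
    fix t :: real
    have yV: "v + t *\<^sub>R w \<in> V" using vV wV sub by (simp add: subspace_add subspace_scale)
    have e1: "(v + t *\<^sub>R w) \<bullet> (A *v (v + t *\<^sub>R w)) = l + 2 * t * (w \<bullet> w) + t^2 * (w \<bullet> (A *v w))"
      using wAv vAw unfolding l_def
      by (simp add: matrix_vector_right_distrib inner_add_left inner_add_right matrix_vector_mult_scaleR power2_eq_square algebra_simps)
    have e2: "(v + t *\<^sub>R w) \<bullet> (v + t *\<^sub>R w) = 1 + t^2 * (w \<bullet> w)"
      using vv vw by (simp add: inner_add_left inner_add_right inner_commute power2_eq_square algebra_simps)
    show "0 \<le> 0 + 2 * (- (w \<bullet> w)) * t + (l * (w \<bullet> w) - w \<bullet> (A *v w)) * t^2"
      using claim[OF yV] unfolding e1 e2 by (simp add: algebra_simps)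
  qed
  moreover have "0 \<le> l * (w \<bullet> w) - w \<bullet> (A *v w)" using claim[OF wV] by simp
  ultimately have "(- (w \<bullet> w))^2 \<le> 0 * (l * (w \<bullet> w) - w \<bullet> (A *v w))"
    by (rule quad_disc)
  then have "w = 0" by simp
  then show ?thesis using vV nv unfolding w_def l_def by auto
qed

lemma spectral_sub:
  fixes A :: "real^'n^'n"
  assumes sym: "transpose A = A"
  shows "subspace V \<Longrightarrow> (\<forall>x\<in>V. A *v x \<in> V) \<Longrightarrow>
    \<exists>B. finite B \<and> B \<subseteq> V \<and> span B = V \<and> (\<forall>u\<in>B. \<forall>u'\<in>B. u \<noteq> u' \<longrightarrow> u \<bullet> u' = 0)
      \<and> (\<forall>u\<in>B. norm u = 1 \<and> A *v u = (u \<bullet> (A *v u)) *\<^sub>R u)"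
proof (induction "dim V" arbitrary: V rule: less_induct)
  case less
  show ?case
  proof (cases "V \<subseteq> {0}")
    case True
    then have "V = {0}" using less.prems(1) subspace_0 by blast
    then show ?thesis by (intro exI[of _ "{}"]) auto
  next
    case False
    obtain v where vV: "v \<in> V" and nv: "norm v = 1" and ev: "A *v v = (v \<bullet> (A *v v)) *\<^sub>R v"
      using eigvec_exists[OF sym less.prems(1) False less.prems(2)] by blast
    have vv: "v \<bullet> v = 1" using nv by (simp add: dot_square_norm)
    define V' where "V' = {x\<in>V. v \<bullet> x = 0}"
    have sV': "subspace V'" using less.prems(1) unfolding V'_def subspace_def
      by (auto simp: inner_add_right)
    have iV': "\<forall>x\<in>V'. A *v x \<in> V'"
    proof
      fix x assume x: "x \<in> V'"
      have "v \<bullet> (A *v x) = (A *v v) \<bullet> x" using sym_inner[OF sym, of v x] by simp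
      also have "\<dots> = (v \<bullet> (A *v v)) * (v \<bullet> x)" by (subst ev) simp
      also have "\<dots> = 0" using x unfolding V'_def by simp
      finally show "A *v x \<in> V'" using x less.prems(2) unfolding V'_def by auto
    qed
    have "v \<notin> V'" using vv unfolding V'_def by auto
    then have "V' \<subset> V" using vV unfolding V'_def by blast
    then have "span V' \<subset> span V"
      using sV' less.prems(1) by (metis span_eq_iff)
    then have "dim V' < dim V" by (rule dim_psubset)
    from less.hyps[OF this sV' iV'] obtain B' where B': "finite B'" "B' \<subseteq> V'" "span B' = V'"
      "\<forall>u\<in>B'. \<forall>u'\<in>B'. u \<noteq> u' \<longrightarrow> u \<bullet> u' = 0"
      "\<forall>u\<in>B'. norm u = 1 \<and> A *v u = (u \<bullet> (A *v u)) *\<^sub>R u" by blast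
    have orth: "\<forall>u\<in>B'. v \<bullet> u = 0 \<and> u \<bullet> v = 0" using B'(2) unfolding V'_def by (auto simp: inner_commute)
    have sub1: "insert v B' \<subseteq> V" using vV B'(2) unfolding V'_def by auto
    have "span (insert v B') = V"
    proof
      show "span (insert v B') \<subseteq> V" using sub1 less.prems(1) by (simp add: span_minimal)
      show "V \<subseteq> span (insert v B')"
      proof
        fix x assume x: "x \<in> V"
        have "x - (v \<bullet> x) *\<^sub>R v \<in> V'" unfolding V'_def using x vV vv less.prems(1)
          by (simp add: subspace_diff subspace_scale inner_diff_right)
        then have "x - (v \<bullet> x) *\<^sub>R v \<in> span (insert v B')"
          using B'(3) span_mono[of B' "insert v B'"] by auto
        moreover have "(v \<bullet> x) *\<^sub>R v \<in> span (insert v B')" by (simp add: span_base span_mul)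
        ultimately have "(x - (v \<bullet> x) *\<^sub>R v) + (v \<bullet> x) *\<^sub>R v \<in> span (insert v B')"
          by (rule span_add)
        then show "x \<in> span (insert v B')" by simp
      qed
    qed
    moreover have "\<forall>u\<in>insert v B'. \<forall>u'\<in>insert v B'. u \<noteq> u' \<longrightarrow> u \<bullet> u' = 0"
      using B'(4) orth by auto
    ultimately show ?thesis using B' sub1 nv ev by (intro exI[of _ "insert v B'"]) auto
  qed
qed




lemma psd_sqrt_props:
  fixes A :: "real^'n^'n"
  assumes psdA: "psd A"
  shows "psd (psd_sqrt A) \<and> psd_sqrt A ** psd_sqrt A = A"
proof -
  have symA: "transpose A = A" using psdA by (simp add: psd_def)
  have "\<exists>B. finite B \<and> span B = UNIV \<and> (\<forall>u\<in>B. \<forall>u'\<in>B. u \<noteq> u' \<longrightarrow> u \<bullet> u' = 0)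
    \<and> (\<forall>u\<in>B. norm u = 1 \<and> A *v u = (u \<bullet> (A *v u)) *\<^sub>R u)"
    using spectral_sub[OF symA subspace_UNIV] by simp
  then obtain B where B: "finite B" "span B = UNIV" "\<forall>u\<in>B. \<forall>u'\<in>B. u \<noteq> u' \<longrightarrow> u \<bullet> u' = 0"
    "\<forall>u\<in>B. norm u = 1 \<and> A *v u = (u \<bullet> (A *v u)) *\<^sub>R u"
    by auto
  define ev where "ev u = u \<bullet> (A *v u)" for u
  have evnn: "0 \<le> ev u" for u using psdA by (simp add: psd_def ev_def)
  have uu: "u \<bullet> u = 1" if "u \<in> B" for u using B(4) that by (simp add: dot_square_norm)
  have Au: "A *v u = ev u *\<^sub>R u" if "u \<in> B" for u using B(4) that by (simp add: ev_def)
  define f where "f x = (\<Sum>u\<in>B. (sqrt (ev u) * (u \<bullet> x)) *\<^sub>R u)" for x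
  have linf: "linear f"
    by (rule linearI) (simp_all add: f_def inner_add_right scaleR_add_left sum.distrib scaleR_sum_right algebra_simps)
  define S where "S = matrix f"
  have Sv: "S *v x = f x" for x unfolding S_def using linf by (simp add: matrix_works)
  have fu: "f u = sqrt (ev u) *\<^sub>R u" if u: "u \<in> B" for u
  proof -
    have "f u = (sqrt (ev u) * (u \<bullet> u)) *\<^sub>R u + (\<Sum>u'\<in>B - {u}. (sqrt (ev u') * (u' \<bullet> u)) *\<^sub>R u')"
      unfolding f_def using B(1) u by (simp add: sum.remove)
    also have "(\<Sum>u'\<in>B - {u}. (sqrt (ev u') * (u' \<bullet> u)) *\<^sub>R u') = 0"
      using B(3) u by (intro sum.neutral) auto
    finally show ?thesis using uu[OF u] by simp
  qed
  have ent: "S $ i $ j = (\<Sum>u\<in>B. sqrt (ev u) * (u $ j) * (u $ i))" for i j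
    unfolding S_def f_def by (simp add: matrix_def sum_component inner_axis)
  have symS: "transpose S = S"
    by (simp add: vec_eq_iff transpose_def ent mult.commute mult.left_commute)
  have nnS: "0 \<le> x \<bullet> (S *v x)" for x
  proof -
    have "x \<bullet> (S *v x) = (\<Sum>u\<in>B. sqrt (ev u) * (u \<bullet> x) * (u \<bullet> x))"
      unfolding Sv f_def by (simp add: inner_sum_right inner_commute)
    also have "\<dots> \<ge> 0" using evnn by (intro sum_nonneg) (metis mult.assoc mult_nonneg_nonneg real_sqrt_ge_zero zero_le_square)
    finally show ?thesis .
  qed
  have psdS: "psd S" using symS nnS by (simp add: psd_def)
  have SS: "S ** S = A"
  proof -
    have "f (f x) = A *v x" for x
    proof (rule linear_eq_on[of "\<lambda>x. f (f x)" "\<lambda>x. A *v x" x B])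
      show "linear (\<lambda>x. f (f x))" using linf linear_compose[of f f] by (simp add: o_def)
      show "linear ((*v) A)" by simp
      show "x \<in> span B" using B(2) by simp
      fix b assume b: "b \<in> B"
      have "f (f b) = sqrt (ev b) *\<^sub>R f b" using fu[OF b] linear_scale[OF linf] by simp
      also have "\<dots> = (sqrt (ev b) * sqrt (ev b)) *\<^sub>R b" using fu[OF b] by simp
      also have "\<dots> = A *v b" using Au[OF b] evnn[of b] by simp
      finally show "f (f b) = A *v b" .
    qed
    then show ?thesis by (simp add: matrix_eq Sv flip: matrix_vector_mul_assoc)
  qed
  have uniq: "T = S" if psdT: "psd T" and TT: "T ** T = A" for T
  proof -
    have symT: "transpose T = T" using psdT by (simp add: psd_def)
    have TTv: "T *v (T *v x) = A *v x" for x using TT by (simp add: matrix_vector_mul_assoc)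
    have Tu: "T *v u = sqrt (ev u) *\<^sub>R u" if u: "u \<in> B" for u
    proof (cases "ev u = 0")
      case True
      have "(T *v u) \<bullet> (T *v u) = u \<bullet> (T *v (T *v u))" using sym_inner[OF symT] by simp
      also have "\<dots> = 0" using TTv Au[OF u] True by simp
      finally show ?thesis using True by simp
    next
      case False
      define s where "s = sqrt (ev u)"
      have s: "s > 0" using False evnn[of u] by (simp add: s_def)
      have ss: "s * s = ev u" using evnn[of u] by (simp add: s_def)
      define w where "w = T *v u - s *\<^sub>R u"
      have "T *v w + s *\<^sub>R w = T *v (T *v u) - (s * s) *\<^sub>R u"
        unfolding w_def by (simp add: matrix_vector_mult_diff_distrib matrix_vector_mult_scaleR algebra_simps)
      also have "\<dots> = 0" using TTv Au[OF u] ss by simp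
      finally have "T *v w = - (s *\<^sub>R w)" by (simp add: eq_neg_iff_add_eq_0)
      then have "w \<bullet> (T *v w) = - s * (w \<bullet> w)" by simp
      moreover have "0 \<le> w \<bullet> (T *v w)" using psdT by (simp add: psd_def)
      ultimately have "w \<bullet> w \<le> 0" using s by (simp add: mult_le_0_iff)
      then have "w = 0" by (metis antisym inner_ge_zero inner_eq_zero_iff)
      then show ?thesis by (simp add: w_def s_def)
    qed
    have "T *v x = S *v x" for x
    proof (rule linear_eq_on[of "\<lambda>x. T *v x" "\<lambda>x. S *v x" x B])
      show "linear ((*v) T)" by simp
      show "linear ((*v) S)" by simp
      show "x \<in> span B" using B(2) by simp
      fix b assume b: "b \<in> B"
      show "T *v b = S *v b" using Tu[OF b] fu[OF b] Sv by simp
    qed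
    then show ?thesis by (simp add: matrix_eq)
  qed
  have "psd_sqrt A = S"
    unfolding psd_sqrt_def
  proof (rule the_equality)
    show "psd S \<and> S ** S = A" using psdS SS by simp
  next
    fix T assume "psd T \<and> T ** T = A"
    then show "T = S" using uniq by simp
  qed
  then show ?thesis using psdS SS by simp
qed



lemma diag_inner:
  fixes M :: "real^'n^'n"
  shows "axis i 1 \<bullet> (M *v axis i 1) = M $ i $ i"
  by (simp add: matrix_vector_mul_component inner_axis inner_commute[of "axis i 1"])

lemma frob:
  fixes P Q :: "real^'n^'n"
  assumes symP: "transpose P = P" and idP: "P ** P = P" and psdQ: "psd Q" and psdQ': "psd (mat 1 - Q)"
  shows "(P *v (Q *v x)) \<bullet> (P *v (Q *v x)) \<le> trace (Q ** P) * (x \<bullet> x)"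
proof -
  have symQ: "transpose Q = Q" using psdQ by (simp add: psd_def)
  let ?e = "\<lambda>i. axis i (1::real) :: real^'n"
  let ?y = "P *v (Q *v x)"
  have comp: "?y $ i = (Q *v (P *v ?e i)) \<bullet> x" for i
  proof -
    have "?y $ i = ?e i \<bullet> ?y" by (simp add: inner_axis inner_commute[of "axis i 1"])
    also have "\<dots> = (P *v ?e i) \<bullet> (Q *v x)" using sym_inner[OF symP] by simp
    also have "\<dots> = (Q *v (P *v ?e i)) \<bullet> x" using sym_inner[OF symQ] by simp
    finally show ?thesis .
  qed
  have bd: "(?y $ i)^2 \<le> ((P *v ?e i) \<bullet> (Q *v (P *v ?e i))) * (x \<bullet> x)" for i
  proof -
    have "(?y $ i)^2 \<le> ((Q *v (P *v ?e i)) \<bullet> (Q *v (P *v ?e i))) * (x \<bullet> x)"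
      unfolding comp by (rule Cauchy_Schwarz_ineq)
    also have "\<dots> \<le> ((P *v ?e i) \<bullet> (Q *v (P *v ?e i))) * (x \<bullet> x)"
      by (rule mult_right_mono[OF contraction_sq[OF psdQ psdQ']]) simp
    finally show ?thesis .
  qed
  have dg: "(P *v ?e i) \<bullet> (Q *v (P *v ?e i)) = (P ** Q ** P) $ i $ i" for i
  proof -
    have "(P *v ?e i) \<bullet> (Q *v (P *v ?e i)) = ?e i \<bullet> (P *v (Q *v (P *v ?e i)))"
      using sym_inner[OF symP] by simp
    also have "\<dots> = ?e i \<bullet> ((P ** Q ** P) *v ?e i)" by (simp add: matrix_vector_mul_assoc matrix_mul_assoc)
    also have "\<dots> = (P ** Q ** P) $ i $ i" by (rule diag_inner)
    finally show ?thesis .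
  qed
  have "?y \<bullet> ?y = (\<Sum>i\<in>UNIV. (?y $ i)^2)" by (simp add: inner_vec_def power2_eq_square)
  also have "\<dots> \<le> (\<Sum>i\<in>UNIV. ((P ** Q ** P) $ i $ i) * (x \<bullet> x))"
    using bd dg by (intro sum_mono) simp
  also have "\<dots> = trace (P ** Q ** P) * (x \<bullet> x)" by (simp add: trace_def sum_distrib_right)
  also have "trace (P ** Q ** P) = trace (Q ** P)"
  proof -
    have "trace (P ** (Q ** P)) = trace ((Q ** P) ** P)" by (rule trace_mul_sym)
    also have "\<dots> = trace (Q ** P)" by (metis matrix_mul_assoc idP)
    finally show ?thesis by (simp add: matrix_mul_assoc)
  qed
  finally show ?thesis .
qed

lemma proj_contr:
  fixes P :: "real^'n^'n"
  assumes symP: "transpose P = P" and idP: "P ** P = P"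
  shows "norm (P *v y) \<le> norm y"
proof -
  have "(P *v y) \<bullet> (P *v y) = y \<bullet> (P *v y)"
    using sym_inner[OF symP, of y "P *v y"] idP by (simp add: matrix_vector_mul_assoc)
  also have "\<dots> \<le> norm y * norm (P *v y)" by (rule norm_cauchy_schwarz)
  finally have "norm (P *v y) ^2 \<le> norm y * norm (P *v y)" by (simp add: dot_square_norm)
  then show ?thesis
    by (cases "norm (P *v y) = 0") (auto simp: power2_eq_square)
qed



theorem corollary4:
  fixes Pstar Phat :: "real^'d^'d" and mstar L :: nat and beta :: "nat \<Rightarrow> real^'d"
    and \<rho> h \<delta> :: real
  assumes "orth_proj mstar Pstar"
    and "L \<ge> 1"
    and "Phat \<in> Aset mstar"
    and "\<forall>P \<in> Aset mstar. objective beta L Phat \<le> objective beta L P"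
    and "0 < \<rho>" and "\<rho> < 1" and "0 < h" and "0 \<le> \<delta>"
    and "trace ((mat 1 - Phat) ** Pstar) \<le> \<delta>\<^sup>2"
  shows "\<forall>x :: real^'d. norm (psd_sqrt (mat 1 + (1 / \<rho>\<^sup>2) *\<^sub>R Phat) *v x) \<le> h
           \<longrightarrow> norm (Pstar *v x) \<le> (\<rho> + \<delta>) * h"
proof (intro allI impI)
  fix x :: "real^'d"
  define c where "c = 1 / \<rho>\<^sup>2"
  have c: "c > 0" using assms(5) by (simp add: c_def)
  have symP: "transpose Pstar = Pstar" and idP: "Pstar ** Pstar = Pstar"
    using assms(1) by (auto simp: orth_proj_def)
  have symH: "transpose Phat = Phat" and psdH: "psd Phat" and psdB: "psd (mat 1 - Phat)"
    using assms(3) by (auto simp: Aset_def loewner_le_def)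
  have psdH': "psd (mat 1 - (mat 1 - Phat))" using psdH by simp
  define M where "M = mat 1 + c *\<^sub>R Phat"
  have Mv: "M *v y = y + c *\<^sub>R (Phat *v y)" for y
    by (simp add: M_def matrix_vector_mult_add_rdistrib scaleR_matrix_vector_assoc)
  have psdM: "psd M"
  proof -
    have "transpose M = M"
      using symH by (simp add: M_def vec_eq_iff transpose_def mat_def)
    moreover have "0 \<le> y \<bullet> (M *v y)" for y
    proof -
      have "0 \<le> y \<bullet> (Phat *v y)" using psdH by (simp add: psd_def)
      then show ?thesis using c by (simp add: Mv inner_add_right)
    qed
    ultimately show ?thesis by (simp add: psd_def)
  qed
  define S where "S = psd_sqrt M"
  have psdS: "psd S" and SS: "S ** S = M" using psd_sqrt_props[OF psdM] by (auto simp: S_def)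
  have symS: "transpose S = S" using psdS by (simp add: psd_def)
  assume hx: "norm (psd_sqrt (mat 1 + (1 / \<rho>\<^sup>2) *\<^sub>R Phat) *v x) \<le> h"
  then have hx': "norm (S *v x) \<le> h" by (simp add: S_def M_def c_def)
  have "norm (S *v x) ^ 2 = (S *v x) \<bullet> (S *v x)" by (simp add: dot_square_norm)
  also have "\<dots> = x \<bullet> (S *v (S *v x))" by (rule sym_inner[OF symS])
  also have "\<dots> = x \<bullet> (M *v x)" using SS by (simp add: matrix_vector_mul_assoc)
  also have "\<dots> = x \<bullet> x + c * (x \<bullet> (Phat *v x))" by (simp add: Mv inner_add_right)
  finally have eq: "norm (S *v x) ^ 2 = x \<bullet> x + c * (x \<bullet> (Phat *v x))" .
  have h2: "norm (S *v x) ^ 2 \<le> h^2" using hx' by (simp add: power_mono)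
  have xPx: "0 \<le> x \<bullet> (Phat *v x)" using psdH by (simp add: psd_def)
  have xx: "x \<bullet> x \<le> h^2" using eq h2 c xPx by (smt (verit) mult_nonneg_nonneg)
  then have "norm x ^ 2 \<le> h ^ 2" by (simp add: dot_square_norm)
  then have nx: "norm x \<le> h" by (rule power2_le_imp_le) (use assms(7) in simp)
  have "c * (x \<bullet> (Phat *v x)) \<le> h^2" using eq h2 inner_ge_zero[of x] by linarith
  then have "x \<bullet> (Phat *v x) \<le> \<rho>^2 * h^2" using assms(5) by (simp add: c_def field_simps)
  then have "norm (Phat *v x) ^ 2 \<le> (\<rho> * h)^2"
    using contraction_sq[OF psdH psdB, of x] by (simp add: dot_square_norm power_mult_distrib)
  then have n1: "norm (Phat *v x) \<le> \<rho> * h"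
    by (rule power2_le_imp_le) (use assms(5,7) in simp)
  have "norm (Pstar *v ((mat 1 - Phat) *v x)) ^ 2 \<le> trace ((mat 1 - Phat) ** Pstar) * norm x ^ 2"
    using frob[OF symP idP psdB psdH', of x] by (simp add: dot_square_norm)
  also have "\<dots> \<le> \<delta>^2 * norm x ^ 2" using assms(9) by (simp add: mult_right_mono)
  also have "\<dots> = (\<delta> * norm x)^2" by (simp add: power_mult_distrib)
  finally have n2: "norm (Pstar *v ((mat 1 - Phat) *v x)) \<le> \<delta> * norm x"
    by (rule power2_le_imp_le) (use assms(8) in simp)
  have split: "Pstar *v x = Pstar *v (Phat *v x) + Pstar *v ((mat 1 - Phat) *v x)"
    by (simp add: matrix_vector_mult_diff_rdistrib matrix_vector_right_distrib[symmetric])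
  have "norm (Pstar *v x) \<le> norm (Pstar *v (Phat *v x)) + norm (Pstar *v ((mat 1 - Phat) *v x))"
    unfolding split by (rule norm_triangle_ineq)
  also have "\<dots> \<le> \<rho> * h + \<delta> * norm x"
    using proj_contr[OF symP idP, of "Phat *v x"] n1 n2 by linarith
  also have "\<dots> \<le> \<rho> * h + \<delta> * h" using nx assms(8) by (simp add: mult_left_mono)
  finally show "norm (Pstar *v x) \<le> (\<rho> + \<delta>) * h" by (simp add: algebra_simps)
qed

end
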